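(* Let $\mathcal N$ be a monotonic max-sum $(\mathrm{Col},\delta)$-GNN with $L$ layers and dimensions $\delta_0,\dots,\delta_L$. Then for every $0\le \ell\le L$ and every $1\le i\le \delta_\ell$, the set $X_\ell^i$ satisfies $X_\ell^i\subseteq \mathbb R_{\ge 0}$, and for every $\alpha\in\mathbb R$ the set $X_\ell^i\setminus X_\ell^i{}_{>\alpha}$ is finite, where $X_\ell^i{}_{>\alpha}=\{\alpha'\in X_\ell^i\mid \alpha'>\alpha\}$. (Consequently every nonempty $X_\ell^i{}_{>\alpha}$ has a least element.)
   Context: Graphs and GNNs. For a finite set of colours $\mathrm{Col}$ and $\delta\in\mathbb N$, a $(\mathrm{Col},\delta)$-graph is $G=\langle V,\{E^c\}_{c\in\mathrm{Col}},\lambda\rangle$ where $V$ is a finite set of vertices, $E^c\subseteq V\times V$ for each colour $c$, and $\lambda$ assigns to each $v\in V$ a feature vector $\mathbf v\in\mathbb R^\delta$. A $(\mathrm{Col},\delta)$-GNN $\mathcal N$ with $L\ge 1$ layers consists of dimensions $\delta_0=\delta,\delta_1,\dots,\delta_{L-1},\delta_L=\delta$; real matrices $A_\ell$ and $B_\ell^c$ of size $\delta_\ell\times\delta_{\ell-1}$ and bias vectors $b_\ell\in\mathbb R^{\delta_\ell}$ for $1\le\ell\le L$, $c\in\mathrm{Col}$; aggregation functions $\mathrm{agg}_\ell$ from finite real multisets to $\mathbb R$ (applied componentwise to finite multisets of vectors); an activation function $\sigma:\mathbb R\to\mathbb R$ and a classification function $\mathrm{cls}:\mathbb R\to\{0,1\}$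 (both applied componentwise). Applying $\mathcal N$ to $G$ produces labellings $\lambda_0=\lambda,\lambda_1,\dots,\lambda_L$ where, writing $\mathbf v_\ell$ for the vector of $v$ under $\lambda_\ell$, $\mathbf v_\ell=\sigma\big(A_\ell\mathbf v_{\ell-1}+\sum_{c\in\mathrm{Col}}B_\ell^c\,\mathrm{agg}_\ell(\{\!\{\mathbf u_{\ell-1}\mid (v,u)\in E^c\}\!\})+b_\ell\big)$. Max-sum aggregation. For $k\in\mathbb N_0\cup\{\infty\}$ and a finite real multiset $S$, let $m=\min(k,|S|)$; $\mathrm{maxsum}_k(S)=0$ if $m=0$, and otherwise it is the sum of the $m$ largest elements of $S$, counting multiplicities. Monotonic max-sum GNN: a $(\mathrm{Col},\delta)$-GNN such that (i) all entries of every $A_\ell$ and $B_\ell^c$ are nonnegative; (ii) each $\mathrm{agg}_\ell$ is $\mathrm{maxsum}_{k_\ell}$ for some $k_\ell\in\mathbb N_0\cup\{\infty\}$; (iii) $\sigma$ is monotonically increasing ($x<y\Rightarrow\sigma(x)\le\sigma(y)$), unbounded (for every $y$ there is $x$ with $\sigma(x)>y$), and takes values in $\mathbb R_{\ge0}$ with range $\mathbb R_{\ge 0}$; (iv) $\mathrm{cls}$ is a step function with some threshold $t\in\mathbb R$: $\mathrm{cls}(t')=0$ for $t'<t$ and $\mathrm{cls}(t')=1$ for $t'\ge t$. Sets $X_\ell^i$. A $(\mathrm{Col},\ell)$-multiset family $\mathcal Y$ assigns to each $c\in\mathrm{Col}$ a finite multiset $\mathcal Y^c$ of vectors of dimension $\delta_\ell$.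 For $1\le\ell\le L$, $1\le i\le\delta_\ell$, a vector $\mathbf x$ of dimension $\delta_{\ell-1}$ and a $(\mathrm{Col},\ell-1)$-multiset family $\mathcal Y$, let $\mathrm{Val}_\ell^i(\mathbf x,\mathcal Y)$ be the $i$-th component of $A_\ell\mathbf x+\sum_{c}B_\ell^c\,\mathrm{maxsum}_{k_\ell}(\mathcal Y^c)+b_\ell$. Define $X_0^i=\{0,1\}$ for $1\le i\le\delta_0$, and for $\ell\ge1$ let $X_\ell^i$ be the set of all values $\sigma(\mathrm{Val}_\ell^i(\mathbf x,\mathcal Y))$ where $\mathbf x$ ranges over vectors of dimension $\delta_{\ell-1}$ with $x_j\in X_{\ell-1}^j$ for all $j$, and $\mathcal Y$ ranges over $(\mathrm{Col},\ell-1)$-multiset families such that $y_j\in X_{\ell-1}^j$ for all $c$, all $\mathbf y\in\mathcal Y^c$ and all $j$. *)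

theory Defs
  imports Main "HOL-Library.Multiset" "HOL-Library.Extended_Nat"
begin

definition maxsum :: "enat \<Rightarrow> real multiset \<Rightarrow> real" where
  "maxsum k S = (if k = \<infinity> then sum_mset S
                 else sum_list (take (the_enat k) (rev (sorted_list_of_multiset S))))"

(* Layers are numbered 1..nL; vectors of dimension d are functions nat => real,
   only components 0..d-1 being relevant (component i corresponds to i+1 in the paper).
   Amat l i j = (A_l)_{ij}, Bmat l c i j = (B^c_l)_{ij}, bias l i = (b_l)_i.
   cls is the step function with threshold thr. *)
record 'c gnn =
  nL :: nat
  dim :: "nat \<Rightarrow> nat"
  Amat :: "nat \<Rightarrow> nat \<Rightarrow> nat \<Rightarrow> real"
  Bmat :: "nat \<Rightarrow> 'c \<Rightarrow> nat \<Rightarrow> nat \<Rightarrow> real"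
  bias :: "nat \<Rightarrow> nat \<Rightarrow> real"
  aggk :: "nat \<Rightarrow> enat"
  act :: "real \<Rightarrow> real"
  thr :: real

definition cls :: "'c gnn \<Rightarrow> real \<Rightarrow> real" where
  "cls N t' = (if t' < thr N then 0 else 1)"

definition monotonic_maxsum_gnn :: "'c set \<Rightarrow> nat \<Rightarrow> 'c gnn \<Rightarrow> bool" where
  "monotonic_maxsum_gnn Col \<delta> N \<longleftrightarrow>
     finite Col \<and> nL N \<ge> 1 \<and> dim N 0 = \<delta> \<and> dim N (nL N) = \<delta> \<and>
     (\<forall>l i j. 1 \<le> l \<and> l \<le> nL N \<and> i < dim N l \<and> j < dim N (l - 1) \<longrightarrow>
        Amat N l i j \<ge> 0 \<and> (\<forall>c\<in>Col. Bmat N l c i j \<ge> 0)) \<and>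
     (\<forall>x y. x < y \<longrightarrow> act N x \<le> act N y) \<and>
     (\<forall>y. \<exists>x. act N x > y) \<and>
     range (act N) = {0..}"

definition Val :: "'c set \<Rightarrow> 'c gnn \<Rightarrow> nat \<Rightarrow> nat \<Rightarrow> (nat \<Rightarrow> real)
                   \<Rightarrow> ('c \<Rightarrow> (nat \<Rightarrow> real) multiset) \<Rightarrow> real" where
  "Val Col N l i x Y =
     (\<Sum>j<dim N (l - 1). Amat N l i j * x j)
     + (\<Sum>c\<in>Col. \<Sum>j<dim N (l - 1).
          Bmat N l c i j * maxsum (aggk N l) (image_mset (\<lambda>y. y j) (Y c)))
     + bias N l i"

fun Xset :: "'c set \<Rightarrow> 'c gnn \<Rightarrow> nat \<Rightarrow> nat \<Rightarrow> real set" where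
  "Xset Col N 0 i = {0, 1}"
| "Xset Col N (Suc l) i =
     {act N (Val Col N (Suc l) i x Y) | x Y.
        (\<forall>j < dim N l. x j \<in> Xset Col N l j) \<and>
        (\<forall>c\<in>Col. \<forall>y\<in>#Y c. \<forall>j < dim N l. y j \<in> Xset Col N l j)}"

end

theory Submission
  imports Defs "HOL-Library.FuncSet"
begin

lemma finite_sums:
  assumes "finite I" "\<And>j. j \<in> I \<Longrightarrow> finite (F j)"
  shows "finite {s. \<exists>f. (\<forall>j\<in>I. f j \<in> F j) \<and> s = (\<Sum>j\<in>I. f j)}"
proof -
  have "{s. \<exists>f. (\<forall>j\<in>I. f j \<in> F j) \<and> s = (\<Sum>j\<in>I. f j)} \<subseteq> (\<lambda>f. \<Sum>j\<in>I. f j) ` (PiE I F)"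
  proof
    fix s assume "s \<in> {s. \<exists>f. (\<forall>j\<in>I. f j \<in> F j) \<and> s = (\<Sum>j\<in>I. f j)}"
    then obtain f where f: "\<forall>j\<in>I. f j \<in> F j" "s = (\<Sum>j\<in>I. f j)" by blast
    have "restrict f I \<in> PiE I F" using f by (simp add: restrict_PiE_iff)
    moreover have "s = (\<Sum>j\<in>I. restrict f I j)" using f by simp
    ultimately show "s \<in> (\<lambda>f. \<Sum>j\<in>I. f j) ` (PiE I F)" by blast
  qed
  moreover have "finite (PiE I F)" using assms by (simp add: finite_PiE)
  ultimately show ?thesis by (meson finite_imageI finite_subset)
qed

lemma sum_mset_count:
  fixes N :: "real multiset"
  assumes "finite T" "set_mset N \<subseteq> T"
  shows "sum_mset N = (\<Sum>t\<in>T. of_nat (count N t) * t)"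
  using assms(2)
proof (induction N)
  case empty then show ?case by simp
next
  case (add x N)
  have xT: "x \<in> T" using add by simp
  have "(\<Sum>t\<in>T. of_nat (count (add_mset x N) t) * t) = (\<Sum>t\<in>T. of_nat (count N t) * t + (if t = x then x else 0))"
    by (rule sum.cong) (auto simp: algebra_simps)
  also have "\<dots> = (\<Sum>t\<in>T. of_nat (count N t) * t) + x"
    using xT assms(1) by (simp add: sum.distrib)
  finally show ?case using add by simp
qed

lemma sum_mset_nonneg':
  fixes N :: "real multiset"
  shows "\<forall>y\<in>#N. y \<ge> 0 \<Longrightarrow> sum_mset N \<ge> 0"
  by (induction N) auto

lemma mem_le_sum_mset:
  fixes N :: "real multiset"
  assumes "x \<in># N" "\<forall>y\<in>#N. y \<ge> 0"
  shows "x \<le> sum_mset N"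
proof -
  obtain N' where "N = add_mset x N'" using assms(1) by (metis multi_member_split)
  moreover have "sum_mset N' \<ge> 0" using assms(2) calculation by (simp add: sum_mset_nonneg')
  ultimately show ?thesis by simp
qed

lemma maxsum_sub: "\<exists>N. N \<subseteq># M \<and> maxsum k M = sum_mset N"
proof (cases "k = \<infinity>")
  case True then show ?thesis by (auto simp: maxsum_def intro!: exI[of _ M])
next
  case False
  let ?xs = "rev (sorted_list_of_multiset M)"
  have "mset (take (the_enat k) ?xs) \<subseteq># mset ?xs"
    by (metis append_take_drop_id mset_append mset_subset_eq_add_left)
  moreover have "mset ?xs = M" by simp
  moreover have "maxsum k M = sum_mset (mset (take (the_enat k) ?xs))"
    unfolding maxsum_def if_not_P[OF False] by (simp add: sum_mset_sum_list)
  ultimately show ?thesis by metis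
qed

lemma bounded_multiples:
  fixes t \<beta> :: real
  assumes "t \<ge> 0"
  shows "finite {r. \<exists>n::nat. r = of_nat n * t \<and> r \<le> \<beta>}"
proof (cases "t = 0")
  case True
  then have "{r. \<exists>n::nat. r = of_nat n * t \<and> r \<le> \<beta>} \<subseteq> {0}" by auto
  then show ?thesis using finite_subset by blast
next
  case False
  then have tp: "t > 0" using assms by simp
  have "{r. \<exists>n::nat. r = of_nat n * t \<and> r \<le> \<beta>} \<subseteq> (\<lambda>n. of_nat n * t) ` {..nat \<lceil>\<beta> / t\<rceil>}"
  proof
    fix r assume "r \<in> {r. \<exists>n::nat. r = of_nat n * t \<and> r \<le> \<beta>}"
    then obtain n :: nat where n: "r = n * t" "r \<le> \<beta>" by blast
    then have "real n \<le> \<beta> / t" using tp by (simp add: pos_le_divide_eq)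
    then have "n \<le> nat \<lceil>\<beta> / t\<rceil>" by linarith
    then show "r \<in> (\<lambda>n. of_nat n * t) ` {..nat \<lceil>\<beta> / t\<rceil>}" using n by auto
  qed
  then show ?thesis using finite_subset by blast
qed

lemma maxsum_finite:
  fixes S :: "real set"
  assumes S0: "S \<subseteq> {0..}" and Sf: "finite {s\<in>S. s \<le> \<beta>}"
  shows "finite {m. \<exists>M. set_mset M \<subseteq> S \<and> m = maxsum k M \<and> m \<le> \<beta>}"
proof -
  let ?T = "{s\<in>S. s \<le> \<beta>}"
  let ?G = "\<lambda>t. {r. \<exists>n::nat. r = of_nat n * t \<and> r \<le> \<beta>}"
  have "{m. \<exists>M. set_mset M \<subseteq> S \<and> m = maxsum k M \<and> m \<le> \<beta>} \<subseteq>
        {s. \<exists>f. (\<forall>j\<in>?T. f j \<in> ?G j) \<and> s = (\<Sum>j\<in>?T. f j)}"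
  proof
    fix m assume "m \<in> {m. \<exists>M. set_mset M \<subseteq> S \<and> m = maxsum k M \<and> m \<le> \<beta>}"
    then obtain M where M: "set_mset M \<subseteq> S" "m = maxsum k M" "m \<le> \<beta>" by blast
    obtain N where N: "N \<subseteq># M" "maxsum k M = sum_mset N" using maxsum_sub by blast
    have NS: "set_mset N \<subseteq> S" using N(1) M(1) by (meson mset_subset_eqD subset_iff)
    have N0: "\<forall>y\<in>#N. y \<ge> 0" using NS S0 by auto
    have NT: "set_mset N \<subseteq> ?T"
    proof
      fix y assume "y \<in># N"
      then have "y \<le> sum_mset N" using N0 mem_le_sum_mset by blast
      then show "y \<in> ?T" using NS \<open>y \<in># N\<close> M N by auto
    qed
    have eq: "m = (\<Sum>t\<in>?T. of_nat (count N t) * t)"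
      using sum_mset_count[OF Sf NT] M N by simp
    have G: "\<forall>t\<in>?T. of_nat (count N t) * t \<in> ?G t"
    proof
      fix t assume tT: "t \<in> ?T"
      have "of_nat (count N t) * t \<le> (\<Sum>t\<in>?T. of_nat (count N t) * t)"
        by (rule member_le_sum) (use tT S0 Sf in auto)
      then show "of_nat (count N t) * t \<in> ?G t" using eq M by auto
    qed
    show "m \<in> {s. \<exists>f. (\<forall>j\<in>?T. f j \<in> ?G j) \<and> s = (\<Sum>j\<in>?T. f j)}"
      using eq G by (intro CollectI exI[where x="\<lambda>t. of_nat (count N t) * t"]) simp
  qed
  moreover have "finite {s. \<exists>f. (\<forall>j\<in>?T. f j \<in> ?G j) \<and> s = (\<Sum>j\<in>?T. f j)}"
    by (rule finite_sums[OF Sf]) (use S0 bounded_multiples in auto)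
  ultimately show ?thesis using finite_subset by blast
qed


lemma maxsum_nonneg:
  assumes "set_mset M \<subseteq> {0..}"
  shows "maxsum k M \<ge> 0"
proof -
  obtain N where N: "N \<subseteq># M" "maxsum k M = sum_mset N" using maxsum_sub by blast
  have "\<forall>y\<in>#N. y \<ge> 0" using N(1) assms by (auto dest: mset_subset_eqD)
  then show ?thesis using N sum_mset_nonneg' by simp
qed

lemma core:
  assumes mon: "monotonic_maxsum_gnn Col \<delta> N"
  shows "l \<le> nL N \<Longrightarrow> i < dim N l \<Longrightarrow>
    Xset Col N l i \<subseteq> {0..} \<and> (\<forall>\<beta>. finite {a \<in> Xset Col N l i. a \<le> \<beta>})"
proof (induction l arbitrary: i)
  case 0
  then show ?case by auto
next
  case (Suc l)
  have IH: "\<And>j. j < dim N l \<Longrightarrow> Xset Col N l j \<subseteq> {0..} \<and> (\<forall>\<beta>. finite {a \<in> Xset Col N l j. a \<le> \<beta>})"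
    using Suc by simp
  have finCol: "finite Col" using mon by (simp add: monotonic_maxsum_gnn_def)
  have actmono: "\<And>x y. x < y \<Longrightarrow> act N x \<le> act N y" using mon by (simp add: monotonic_maxsum_gnn_def)
  have actunb: "\<And>y. \<exists>x. act N x > y" using mon by (simp add: monotonic_maxsum_gnn_def)
  have actrange: "range (act N) = {0..}" using mon by (simp add: monotonic_maxsum_gnn_def)
  define d where "d = dim N l"
  define A where "A j = Amat N (Suc l) i j" for j
  define B where "B c j = Bmat N (Suc l) c i j" for c j
  define b where "b = bias N (Suc l) i"
  define k where "k = aggk N (Suc l)"
  have Anonneg: "\<And>j. j < d \<Longrightarrow> A j \<ge> 0" and Bnonneg: "\<And>c j. c \<in> Col \<Longrightarrow> j < d \<Longrightarrow> B c j \<ge> 0"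
    using mon Suc.prems unfolding monotonic_maxsum_gnn_def A_def B_def d_def by auto
  have nonneg: "Xset Col N (Suc l) i \<subseteq> {0..}"
  proof -
    have "Xset Col N (Suc l) i \<subseteq> range (act N)" by auto
    then show ?thesis using actrange by simp
  qed
  have fin: "finite {a \<in> Xset Col N (Suc l) i. a \<le> \<beta>}" for \<beta>
  proof -
    obtain x0 where x0: "act N x0 > \<beta>" using actunb by blast
    define C where "C = x0 - b"
    define FA where "FA j = {r. \<exists>x\<in>Xset Col N l j. r = A j * x \<and> r \<le> C}" for j
    define FB where "FB c j = {r. \<exists>M. set_mset M \<subseteq> Xset Col N l j \<and> r = B c j * maxsum k M \<and> r \<le> C}" for c j
    define SA where "SA = {s. \<exists>f. (\<forall>j\<in>{..<d}. f j \<in> FA j) \<and> s = (\<Sum>j\<in>{..<d}. f j)}"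
    define IS where "IS c = {s. \<exists>f. (\<forall>j\<in>{..<d}. f j \<in> FB c j) \<and> s = (\<Sum>j\<in>{..<d}. f j)}" for c
    define SB where "SB = {s. \<exists>f. (\<forall>c\<in>Col. f c \<in> IS c) \<and> s = (\<Sum>c\<in>Col. f c)}"
    have finFA: "finite (FA j)" if j: "j < d" for j
    proof (cases "A j = 0")
      case True
      then have "FA j \<subseteq> {0}" unfolding FA_def by auto
      then show ?thesis using finite_subset by blast
    next
      case False
      then have Ap: "A j > 0" using Anonneg[OF j] by simp
      have "FA j \<subseteq> (\<lambda>x. A j * x) ` {a \<in> Xset Col N l j. a \<le> C / A j}"
      proof
        fix r assume "r \<in> FA j"
        then obtain x where "x \<in> Xset Col N l j" "r = A j * x" "r \<le> C" unfolding FA_def by blast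
        moreover then have "x \<le> C / A j" using Ap by (simp add: pos_le_divide_eq mult.commute)
        ultimately show "r \<in> (\<lambda>x. A j * x) ` {a \<in> Xset Col N l j. a \<le> C / A j}" by blast
      qed
      moreover have "finite {a \<in> Xset Col N l j. a \<le> C / A j}" using IH j d_def by blast
      ultimately show ?thesis using finite_subset by blast
    qed
    have finFB: "finite (FB c j)" if c: "c \<in> Col" and j: "j < d" for c j
    proof (cases "B c j = 0")
      case True
      then have "FB c j \<subseteq> {0}" unfolding FB_def by auto
      then show ?thesis using finite_subset by blast
    next
      case False
      then have Bp: "B c j > 0" using Bnonneg[OF c j] by simp
      let ?MS = "{m. \<exists>M. set_mset M \<subseteq> Xset Col N l j \<and> m = maxsum k M \<and> m \<le> C / B c j}"
      have "FB c j \<subseteq> (\<lambda>m. B c j * m) ` ?MS"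
      proof
        fix r assume "r \<in> FB c j"
        then obtain M where M: "set_mset M \<subseteq> Xset Col N l j" "r = B c j * maxsum k M" "r \<le> C" unfolding FB_def by blast
        moreover then have "maxsum k M \<le> C / B c j" using Bp by (simp add: pos_le_divide_eq mult.commute)
        ultimately show "r \<in> (\<lambda>m. B c j * m) ` ?MS" by blast
      qed
      moreover have "finite ?MS"
        using maxsum_finite IH j d_def by blast
      ultimately show ?thesis using finite_subset by blast
    qed
    have finSA: "finite SA" unfolding SA_def by (rule finite_sums) (auto intro: finFA)
    have finIS: "finite (IS c)" if "c \<in> Col" for c
      unfolding IS_def by (rule finite_sums) (auto intro: finFB that)
    have finSB: "finite SB" unfolding SB_def by (rule finite_sums) (auto intro: finIS finCol)
    have sub: "{a \<in> Xset Col N (Suc l) i. a \<le> \<beta>} \<subseteq> act N ` ((\<lambda>(p, q). p + q + b) ` (SA \<times> SB))"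
    proof
      fix a assume a: "a \<in> {a \<in> Xset Col N (Suc l) i. a \<le> \<beta>}"
      then obtain x Y where xY: "a = act N (Val Col N (Suc l) i x Y)"
        "\<forall>j < dim N l. x j \<in> Xset Col N l j"
        "\<forall>c\<in>Col. \<forall>y\<in>#Y c. \<forall>j < dim N l. y j \<in> Xset Col N l j" by auto
      define v where "v = Val Col N (Suc l) i x Y"
      have vx0: "v \<le> x0"
      proof (rule ccontr)
        assume "\<not> v \<le> x0"
        then have "act N x0 \<le> act N v" using actmono by simp
        then show False using a xY(1) x0 v_def by simp
      qed
      define ta where "ta j = A j * x j" for j
      define ms where "ms c j = image_mset (\<lambda>y. y j) (Y c)" for c j
      define tb where "tb c j = B c j * maxsum k (ms c j)" for c j
      have msS: "set_mset (ms c j) \<subseteq> Xset Col N l j" if "c \<in> Col" "j < d" for c j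
        using xY(3) that unfolding ms_def d_def by auto
      have ta0: "ta j \<ge> 0" if "j < d" for j
        using Anonneg[OF that] IH[of j] xY(2) that unfolding ta_def d_def by auto
      have tb0: "tb c j \<ge> 0" if "c \<in> Col" "j < d" for c j
      proof -
        have "maxsum k (ms c j) \<ge> 0" using maxsum_nonneg msS[OF that] IH[of j] that d_def by blast
        then show ?thesis using Bnonneg[OF that] unfolding tb_def by simp
      qed
      define S1 where "S1 = (\<Sum>j<d. ta j)"
      define inner where "inner c = (\<Sum>j<d. tb c j)" for c
      define S2 where "S2 = (\<Sum>c\<in>Col. inner c)"
      have veq: "v = S1 + S2 + b"
        unfolding v_def Val_def S1_def S2_def inner_def ta_def tb_def ms_def A_def B_def b_def k_def d_def
        by simp
      have S10: "S1 \<ge> 0" unfolding S1_def using ta0 by (auto intro!: sum_nonneg)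
      have inner0: "inner c \<ge> 0" if "c \<in> Col" for c unfolding inner_def using tb0 that by (auto intro!: sum_nonneg)
      have S20: "S2 \<ge> 0" unfolding S2_def using inner0 by (auto intro!: sum_nonneg)
      have S1C: "S1 \<le> C" and S2C: "S2 \<le> C" using veq vx0 S10 S20 C_def by auto
      have "ta j \<in> FA j" if j: "j < d" for j
      proof -
        have "ta j \<le> S1" unfolding S1_def by (rule member_le_sum) (use j ta0 in auto)
        then show ?thesis unfolding FA_def using xY(2) j S1C d_def ta_def by auto
      qed
      then have "S1 \<in> SA" unfolding SA_def S1_def by blast
      have "inner c \<in> IS c" if c: "c \<in> Col" for c
      proof -
        have innC: "inner c \<le> C" using S2C
          using member_le_sum[of c Col inner] c inner0 finCol unfolding S2_def by auto
        have "tb c j \<in> FB c j" if j: "j < d" for j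
        proof -
          have "tb c j \<le> inner c" unfolding inner_def by (rule member_le_sum) (use j c tb0 in auto)
          then show ?thesis unfolding FB_def using msS[OF c j] innC tb_def by auto
        qed
        then show ?thesis unfolding IS_def inner_def by blast
      qed
      then have "S2 \<in> SB" unfolding SB_def S2_def by blast
      show "a \<in> act N ` ((\<lambda>(p, q). p + q + b) ` (SA \<times> SB))"
        using \<open>S1 \<in> SA\<close> \<open>S2 \<in> SB\<close> veq xY(1) v_def by force
    qed
    show ?thesis using sub finSA finSB finite_subset by blast
  qed
  show ?case using nonneg fin by blast
qed


theorem theorem1:
  fixes Col :: "'c set" and \<delta> :: nat and N :: "'c gnn"
  assumes "monotonic_maxsum_gnn Col \<delta> N"
    and "l \<le> nL N" and "i < dim N l"
  shows "Xset Col N l i \<subseteq> {0..} \<and>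
         (\<forall>\<alpha>::real. finite (Xset Col N l i - {a \<in> Xset Col N l i. a > \<alpha>})) \<and>
         (\<forall>\<alpha>::real. {a \<in> Xset Col N l i. a > \<alpha>} \<noteq> {} \<longrightarrow>
            (\<exists>m \<in> {a \<in> Xset Col N l i. a > \<alpha>}. \<forall>a \<in> {a \<in> Xset Col N l i. a > \<alpha>}. m \<le> a))"
proof -
  let ?X = "Xset Col N l i"
  have c: "?X \<subseteq> {0..}" "\<And>\<beta>. finite {a \<in> ?X. a \<le> \<beta>}" using core[OF assms] by auto
  have eq: "\<And>\<alpha>. ?X - {a \<in> ?X. a > \<alpha>} = {a \<in> ?X. a \<le> \<alpha>}" by auto
  have "\<exists>m \<in> {a \<in> ?X. a > \<alpha>}. \<forall>a \<in> {a \<in> ?X. a > \<alpha>}. m \<le> a"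
    if ne: "{a \<in> ?X. a > \<alpha>} \<noteq> {}" for \<alpha>
  proof -
    obtain a0 where a0: "a0 \<in> ?X" "a0 > \<alpha>" using ne by auto
    let ?F = "{a \<in> ?X. \<alpha> < a \<and> a \<le> a0}"
    have fF: "finite ?F" using c(2)[of a0] by (rule finite_subset[rotated]) auto
    have neF: "?F \<noteq> {}" using a0 by auto
    have "Min ?F \<in> ?F" using Min_in[OF fF neF] .
    moreover have "\<forall>a \<in> {a \<in> ?X. a > \<alpha>}. Min ?F \<le> a"
    proof
      fix a assume a: "a \<in> {a \<in> ?X. a > \<alpha>}"
      show "Min ?F \<le> a"
      proof (cases "a \<le> a0")
        case True then show ?thesis using a fF by (intro Min_le) auto
      next
        case False then show ?thesis using Min_le[OF fF] a0 by fastforce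
      qed
    qed
    ultimately show ?thesis by blast
  qed
  then show ?thesis using c eq by auto
qed

end
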